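(* Let $a,b,g,m,n>0$ and $0<e<1$, and consider the planar system $$\dot x=a-ex-\frac{xy}{1+gy},\qquad \dot y=\frac{xy}{1+gy}-y-\frac{my}{b+ny}.$$ Let $a_1=(eg+1)n$, $a_2=(b+m)(eg+1)+n(e-a)$, $a_3=e(b+m)-ab$, $\Delta=a_2^2-4a_1a_3$, $$a_4=\frac{[en-(b-m)(eg+1)]+\sqrt{4m(eg+1)[ne-b(eg+1)]}}{n},$$ $l=n(eg+g+1)$, $$s_1=(a_1a_3-a_2^2)nl+a_1a_2(en^2+2bl)-a_1^2\left(\frac{b^2l}{n}+2ben+bmg-mn\right),$$ $$s_2=(a_2^3-3a_1a_2a_3)nl+(2a_1^2a_3-a_1a_2^2)(en^2+2bl)+a_1^2a_2\left(\frac{b^2l}{n}+2ben+bmg-mn\right)-2a_1^3eb^2,$$ and $w=s_1\sqrt{\Delta}+s_2$. Suppose $n>\frac{(eg+1)b^2+m(eg+1)b}{me}$ and $a_4<a\le\frac{e(m+b)}{b}$. Let $y_1=\frac{-a_2+\sqrt{\Delta}}{2a_1}$ and $x_1=\frac{a(1+gy_1)}{e+(eg+1)y_1}$, so that $E_1=(x_1,y_1)$ is an endemic equilibrium of the system. Then: (1) if $w<0$, $E_1$ is a stable node or focus; (2) if $w=0$, $E_1$ is a weak center; (3) if $w>0$, $E_1$ is an unstable node or focus.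
   Context: The system is a rescaled SIR epidemic model with saturated infection rate and saturated treatment rate. A "weak center" means an equilibrium whose Jacobian has zero trace and positive determinant (purely imaginary eigenvalues). *)

theory Defs
  imports "HOL-Analysis.Analysis"
begin

definition sir_P :: "real \<Rightarrow> real \<Rightarrow> real \<Rightarrow> real \<Rightarrow> real \<Rightarrow> real" where
  "sir_P a e g x y = a - e * x - x * y / (1 + g * y)"

definition sir_Q :: "real \<Rightarrow> real \<Rightarrow> real \<Rightarrow> real \<Rightarrow> real \<Rightarrow> real \<Rightarrow> real" where
  "sir_Q b g m n x y = x * y / (1 + g * y) - y - m * y / (b + n * y)"

definition jac_trace ::
  "(real \<Rightarrow> real \<Rightarrow> real) \<Rightarrow> (real \<Rightarrow> real \<Rightarrow> real) \<Rightarrow> real \<Rightarrow> real \<Rightarrow> real" where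
  "jac_trace P Q x0 y0 = deriv (\<lambda>x. P x y0) x0 + deriv (\<lambda>y. Q x0 y) y0"

definition jac_det ::
  "(real \<Rightarrow> real \<Rightarrow> real) \<Rightarrow> (real \<Rightarrow> real \<Rightarrow> real) \<Rightarrow> real \<Rightarrow> real \<Rightarrow> real" where
  "jac_det P Q x0 y0 =
     deriv (\<lambda>x. P x y0) x0 * deriv (\<lambda>y. Q x0 y) y0
     - deriv (\<lambda>y. P x0 y) y0 * deriv (\<lambda>x. Q x y0) x0"

text \<open>Node or focus: determinant positive (both eigenvalues have real parts of the same sign,
  no saddle); stable if trace negative, unstable if trace positive.\<close>

definition stable_node_or_focus where
  "stable_node_or_focus P Q x0 y0 \<longleftrightarrow> jac_det P Q x0 y0 > 0 \<and> jac_trace P Q x0 y0 < 0"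

definition unstable_node_or_focus where
  "unstable_node_or_focus P Q x0 y0 \<longleftrightarrow> jac_det P Q x0 y0 > 0 \<and> jac_trace P Q x0 y0 > 0"

definition weak_center where
  "weak_center P Q x0 y0 \<longleftrightarrow> jac_det P Q x0 y0 > 0 \<and> jac_trace P Q x0 y0 = 0"

end

theory Submission
  imports Defs
begin

lemma big:
  fixes b g m n e y :: real
  shows "let k = e*g+1; u = b+n*y; h = 1+g*y; l = n*(e*g+g+1); a1 = k*n;
    A2 = ((b+m)*k + n*e)*u - n*((e+k*y)*(u+m));
    A3 = e*(b+m)*u - b*((e+k*y)*(u+m));
    K = b^2*(e*g+g+1) + 2*b*e*n + b*m*g - m*n;
    T = -(e+1)*h*u^2 - y*u^2 + u^2 + m*u - m*b*h
   in ((a1*A3*u - A2^2)*n*l + a1*A2*u*(e*n^2+2*b*l) - a1^2*K*u^2) * (2*a1*y*u + A2)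
      + ((A2^3 - 3*a1*A2*A3*u)*n*l + (2*a1^2*A3*u^2 - a1*A2^2*u)*(e*n^2+2*b*l)
         + a1^2*A2*K*u^2 - 2*a1^3*e*b^2*u^3)
      = 2*a1^3*T*u^3"
  unfolding Let_def by algebra

theorem theorem2p4:
  fixes a b g m n e :: real
  assumes pos: "a > 0" "b > 0" "g > 0" "m > 0" "n > 0" "0 < e" "e < 1"
  defines "a1 \<equiv> (e * g + 1) * n"
      and "a2 \<equiv> (b + m) * (e * g + 1) + n * (e - a)"
      and "a3 \<equiv> e * (b + m) - a * b"
  defines "\<Delta> \<equiv> a2 ^ 2 - 4 * a1 * a3"
      and "a4 \<equiv> ((e * n - (b - m) * (e * g + 1))
                 + sqrt (4 * m * (e * g + 1) * (n * e - b * (e * g + 1)))) / n"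
      and "l \<equiv> n * (e * g + g + 1)"
  defines "s1 \<equiv> (a1 * a3 - a2 ^ 2) * n * l + a1 * a2 * (e * n ^ 2 + 2 * b * l)
                 - a1 ^ 2 * (b ^ 2 * l / n + 2 * b * e * n + b * m * g - m * n)"
      and "s2 \<equiv> (a2 ^ 3 - 3 * a1 * a2 * a3) * n * l
                 + (2 * a1 ^ 2 * a3 - a1 * a2 ^ 2) * (e * n ^ 2 + 2 * b * l)
                 + a1 ^ 2 * a2 * (b ^ 2 * l / n + 2 * b * e * n + b * m * g - m * n)
                 - 2 * a1 ^ 3 * e * b ^ 2"
  defines "w \<equiv> s1 * sqrt \<Delta> + s2"
  defines "y1 \<equiv> (- a2 + sqrt \<Delta>) / (2 * a1)"
  defines "x1 \<equiv> a * (1 + g * y1) / (e + (e * g + 1) * y1)"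
  defines "P \<equiv> sir_P a e g" and "Q \<equiv> sir_Q b g m n"
  assumes hn: "n > ((e * g + 1) * b ^ 2 + m * (e * g + 1) * b) / (m * e)"
      and ha: "a4 < a" "a \<le> e * (m + b) / b"
  shows "(x1 > 0 \<and> y1 > 0 \<and> P x1 y1 = 0 \<and> Q x1 y1 = 0)
         \<and> (w < 0 \<longrightarrow> stable_node_or_focus P Q x1 y1)
         \<and> (w = 0 \<longrightarrow> weak_center P Q x1 y1)
         \<and> (w > 0 \<longrightarrow> unstable_node_or_focus P Q x1 y1)"
proof -
  define k where "k = e*g+1"
  define y where "y = y1"
  define h where "h = 1+g*y"
  define u where "u = b+n*y"
  define S where "S = sqrt \<Delta>"
  define R where "R = sqrt (4 * m * k * (n * e - b * k))"
  have k0: "k > 0" "k \<ge> 1" using pos unfolding k_def by (auto simp: add_pos_pos)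
  have a1k: "a1 = k*n" unfolding a1_def k_def by simp
  have a10: "a1 > 0" using pos k0 unfolding a1k by simp
  have "((e * g + 1) * b ^ 2 + m * (e * g + 1) * b) < n * (m * e)"
    using hn pos by (simp add: pos_divide_less_eq)
  hence hn': "k*b*(b+m) < m*n*e" unfolding k_def by (simp add: algebra_simps power2_eq_square)
  have "k*b*b \<le> k*b*(b+m)" using pos k0 by (simp add: mult_left_mono)
  hence "m*(k*b*b) < m * (m*n*e)" using hn' pos by (smt (verit) mult_less_cancel_left_pos)
  have radge: "(2*b*k)^2 \<le> 4 * m * k * (n * e - b * k)"
  proof -
    have "4*k*(k*b*(b+m)) \<le> 4*k*(m*n*e)" using hn' k0 by simp
    thus ?thesis by (simp add: algebra_simps power2_eq_square)
  qed
  have rad0: "0 \<le> 4 * m * k * (n * e - b * k)"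
    using radge by (smt (verit) zero_le_power2)
  have R2: "R^2 = 4 * m * k * (n * e - b * k)" unfolding R_def using rad0 by simp
  have Rge: "2*b*k \<le> R" unfolding R_def using radge
    by (metis abs_le_D1 real_sqrt_abs real_sqrt_le_mono)
  have a4eq: "a4 = ((e * n - (b - m) * k) + R) / n" unfolding a4_def R_def k_def by simp
  have na: "e * n - (b - m) * k + R < n * a"
    using ha(1) pos unfolding a4eq by (simp add: divide_less_eq mult.commute)
  have Deq: "\<Delta> = (n*a - e*n + (b-m)*k)^2 - R^2"
    unfolding R2 \<Delta>_def a1_def a2_def a3_def k_def by (simp add: algebra_simps power2_eq_square)
  have D0: "\<Delta> > 0"
  proof -
    have "R \<ge> 0" using Rge pos k0 by (smt (verit) mult_nonneg_nonneg)
    hence "R^2 < (n*a - e*n + (b-m)*k)^2" using na by (intro power_strict_mono) auto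
    thus ?thesis using Deq by simp
  qed
  have a2neg: "a2 < 0" using na Rge unfolding a2_def k_def by (simp add: algebra_simps)
  have S0: "S > 0" unfolding S_def using D0 by simp
  have S2: "S^2 = \<Delta>" unfolding S_def using D0 by simp
  have y0: "y > 0" unfolding y_def y1_def using S0 a2neg a10
    by (intro divide_pos_pos) (auto simp: S_def[symmetric])
  have Sy: "S = 2*a1*y + a2" unfolding y_def y1_def S_def using a10 by simp
  have quad: "a1*y^2 + a2*y + a3 = 0"
  proof -
    have "(2*a1*y + a2)^2 = a2^2 - 4*a1*a3" using S2 Sy \<Delta>_def by simp
    hence "4*a1*(a1*y^2 + a2*y + a3) = 0" by (simp add: algebra_simps power2_eq_square)
    thus ?thesis using a10 by simp
  qed
  have h0: "h > 0" unfolding h_def using pos y0 by (simp add: add_pos_pos)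
  have u0: "u > 0" unfolding u_def using pos y0 by (simp add: add_pos_pos)
  have eky0: "e + k*y > 0" using pos y0 k0 by (simp add: add_pos_pos)
  have au: "a*u = (e+k*y)*(u+m)"
    using quad unfolding u_def a1_def a2_def a3_def k_def by (simp add: algebra_simps power2_eq_square)
  have x1eq: "x1 = a*h/(e+k*y)" unfolding x1_def h_def k_def y_def by simp
  have hx: "x1 = h*(u+m)/u"
  proof -
    have e1: "a*(h*u) = h*((e+k*y)*(u+m))" using au by (metis mult.left_commute)
    show ?thesis unfolding x1eq using eky0 u0 e1 by (simp add: field_simps)
  qed
  have x0: "x1 > 0" unfolding hx using h0 u0 pos by simp
  have ehy: "e*h + y = e + k*y" unfolding h_def k_def by (simp add: algebra_simps)
  have Peq: "P x1 y = 0"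
  proof -
    have "P x1 y = a - x1*(e*h+y)/h" unfolding P_def sir_P_def h_def using h0
      by (simp add: field_simps h_def)
    also have "... = 0" unfolding ehy x1eq using h0 eky0 by simp
    finally show ?thesis .
  qed
  have Qeq: "Q x1 y = 0"
    unfolding Q_def sir_Q_def hx using h0 u0
    by (simp add: h_def[symmetric] u_def[symmetric] field_simps)
  have dPx: "deriv (\<lambda>x. P x y) x1 = -e - y/h"
  proof (rule DERIV_imp_deriv)
    have fe: "(\<lambda>x. P x y) = (\<lambda>x. a - e*x - x*(y/h))"
      by (simp add: P_def sir_P_def h_def fun_eq_iff)
    show "((\<lambda>x. P x y) has_real_derivative (-e - y/h)) (at x1)"
      unfolding fe using h0 by (auto intro!: derivative_eq_intros)
  qed
  have dPy: "deriv (\<lambda>y. P x1 y) y = - x1/h^2"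
  proof (rule DERIV_imp_deriv)
    show "((\<lambda>y. P x1 y) has_real_derivative (- x1/h^2)) (at y)"
      unfolding P_def sir_P_def using h0 unfolding h_def
      by (auto intro!: derivative_eq_intros simp: field_simps power2_eq_square)
  qed
  have dQx: "deriv (\<lambda>x. Q x y) x1 = y/h"
  proof (rule DERIV_imp_deriv)
    have fe: "(\<lambda>x. Q x y) = (\<lambda>x. x*(y/h) - y - m * y / (b + n * y))"
      by (simp add: Q_def sir_Q_def h_def fun_eq_iff)
    show "((\<lambda>x. Q x y) has_real_derivative (y/h)) (at x1)"
      unfolding fe using h0 by (auto intro!: derivative_eq_intros)
  qed
  have dQy: "deriv (\<lambda>y. Q x1 y) y = x1/h^2 - 1 - m*b/u^2"
  proof (rule DERIV_imp_deriv)
    show "((\<lambda>y. Q x1 y) has_real_derivative (x1/h^2 - 1 - m*b/u^2)) (at y)"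
      unfolding Q_def sir_Q_def using h0 u0 unfolding h_def u_def
      by (auto intro!: derivative_eq_intros simp: field_simps power2_eq_square)
  qed
  define T where "T = -(e+1)*h*u^2 - y*u^2 + u^2 + m*u - m*b*h"
  have tr: "jac_trace P Q x1 y * (h*u^2) = T"
  proof -
    have eq: "jac_trace P Q x1 y = -e - y/h + (x1/h^2 - 1 - m*b/u^2)"
      unfolding jac_trace_def using dPx dQy by simp
    have "(-e - y/h + (x1/h^2 - 1 - m*b/u^2)) * (h*u^2) = T" unfolding T_def hx using h0 u0
      by (simp add: field_simps power2_eq_square)
    thus ?thesis unfolding eq .
  qed
  define A2 where "A2 = ((b+m)*k + n*e)*u - n*((e+k*y)*(u+m))"
  define A3 where "A3 = e*(b+m)*u - b*((e+k*y)*(u+m))"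
  have a2u: "a2*u = A2"
  proof -
    have "a2*u = ((b+m)*k + n*e)*u - n*(a*u)" unfolding a2_def k_def by (simp add: algebra_simps)
    thus ?thesis unfolding au A2_def .
  qed
  have a3u: "a3*u = A3"
  proof -
    have "a3*u = e*(b+m)*u - b*(a*u)" unfolding a3_def by (simp add: algebra_simps)
    thus ?thesis unfolding au A3_def .
  qed
  have det: "jac_det P Q x1 y * (h*u^2) = y*(S*u)"
  proof -
    have "jac_det P Q x1 y * (h*u^2) = -e*(u+m)*u+e*h*u^2+e*m*b*h+y*(u^2+m*b)"
    proof -
      have eq: "jac_det P Q x1 y = (-e - y/h) * (x1/h^2 - 1 - m*b/u^2) - (- x1/h^2) * (y/h)"
        unfolding jac_det_def using dPx dQy dPy dQx by simp
      have "((-e - y/h) * (x1/h^2 - 1 - m*b/u^2) - (- x1/h^2) * (y/h)) * (h*u^2) = -e*(u+m)*u+e*h*u^2+e*m*b*h+y*(u^2+m*b)"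
        unfolding hx using h0 u0
        by (simp add: field_simps power2_eq_square)
      thus ?thesis unfolding eq .
    qed
    also have "... = y*(2*a1*y*u + A2)"
      unfolding A2_def a1k h_def u_def k_def by (simp add: algebra_simps power2_eq_square)
    also have "... = y*(2*a1*y*u + a2*u)" unfolding a2u ..
    also have "... = y*(S*u)" unfolding Sy by (simp add: algebra_simps)
    finally show ?thesis .
  qed
  have detpos: "jac_det P Q x1 y > 0"
  proof -
    have "y*(S*u) > 0" using y0 S0 u0 by simp
    hence "jac_det P Q x1 y * (h*u^2) > 0" using det by simp
    moreover have "h*u^2 > 0" using h0 u0 by simp
    ultimately show ?thesis by (simp add: zero_less_mult_iff)
  qed
  define K where "K = b^2*(e*g+g+1) + 2*b*e*n + b*m*g - m*n"
  have Keq: "b ^ 2 * l / n + 2 * b * e * n + b * m * g - m * n = K"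
    unfolding K_def l_def using pos by simp
  have s1u: "s1*u^2 = (a1*A3*u - A2^2)*n*l + a1*A2*u*(e*n^2+2*b*l) - a1^2*K*u^2"
  proof -
    have "s1*u^2 = (a1*(a3*u)*u - (a2*u)^2)*n*l + a1*(a2*u)*u*(e*n^2+2*b*l) - a1^2*K*u^2"
      unfolding s1_def Keq by (simp add: algebra_simps power2_eq_square)
    thus ?thesis unfolding a2u a3u .
  qed
  have s2u: "s2*u^3 = (A2^3 - 3*a1*A2*A3*u)*n*l + (2*a1^2*A3*u^2 - a1*A2^2*u)*(e*n^2+2*b*l)
         + a1^2*A2*K*u^2 - 2*a1^3*e*b^2*u^3"
  proof -
    have "s2*u^3 = ((a2*u)^3 - 3*a1*(a2*u)*(a3*u)*u)*n*l + (2*a1^2*(a3*u)*u^2 - a1*(a2*u)^2*u)*(e*n^2+2*b*l)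
         + a1^2*(a2*u)*K*u^2 - 2*a1^3*e*b^2*u^3"
      unfolding s2_def Keq by (simp add: algebra_simps power2_eq_square power3_eq_cube)
    thus ?thesis unfolding a2u a3u .
  qed
  have Su: "S*u = 2*a1*y*u + A2" unfolding Sy a2u[symmetric] by (simp add: algebra_simps)
  have wu: "w*u^3 = 2*a1^3*T*u^3"
  proof -
    have "w*u^3 = (s1*u^2)*(S*u) + s2*u^3" unfolding w_def S_def by (simp add: algebra_simps power2_eq_square power3_eq_cube)
    also have "... = 2*a1^3*T*u^3"
      unfolding s1u s2u Su using big[of e g b n y m] unfolding Let_def
      unfolding A2_def A3_def K_def T_def a1_def l_def h_def u_def k_def by simp
    finally show ?thesis .
  qed
  have wT: "w = 2*a1^3*(h*u^2) * jac_trace P Q x1 y"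
    using wu u0 tr by (simp add: algebra_simps)
  have c0: "2*a1^3*(h*u^2) > 0" using a10 h0 u0 by simp
  have sgn1: "w < 0 \<longleftrightarrow> jac_trace P Q x1 y < 0" unfolding wT using c0
    by (metis mult_pos_neg mult_less_0_iff less_asym)
  have sgn2: "w = 0 \<longleftrightarrow> jac_trace P Q x1 y = 0" unfolding wT using c0 by (metis mult_eq_0_iff less_irrefl)
  have sgn3: "w > 0 \<longleftrightarrow> jac_trace P Q x1 y > 0" unfolding wT using c0
    by (metis zero_less_mult_pos zero_less_mult_iff)
  show ?thesis
    unfolding stable_node_or_focus_def weak_center_def unstable_node_or_focus_def
    using x0 y0 Peq Qeq detpos sgn1 sgn2 sgn3 unfolding y_def by blast
qed

end
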